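(* Let $T=\{t_1,\ldots,t_N\}$ be documents, each containing at most $L$ distinct words from a dictionary $\{w_1,\ldots,w_D\}$ ($D\ge2$). For a word $w$ let $\#(w)$ be the number of documents containing $w$. Fix $\epsilon\in(0,1]$ and $p=2\log D$. Consider the mapper that, for every document $t$ and every unordered pair of distinct words $(w_1,w_2)$ in $t$, independently emits $((w_1,w_2)\to1)$ with probability $\min\!\left(1,\frac{p}{\epsilon}\frac{1}{\min(\#(w_1),\#(w_2))}\right)$ (OverlapSampleEmit). Then the expected total number of emitted pairs (shuffle size) is $O(DL\log(D)/\epsilon)$, independently of $N$.
   Context: This sampling scheme is used to estimate the overlap similarity $\frac{\#(x,y)}{\min(\#(x),\#(y))}$, where $\#(x,y)$ is the number of documents containing both $x$ and $y$. $\log$ denotes the natural logarithm. *)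

theory Defs
  imports "HOL-Probability.Probability"
begin

text \<open>Documents are a list T of sets of words; words are natural numbers
  below D (the dictionary is {0..<D}).\<close>

definition doc_count :: "nat set list \<Rightarrow> nat \<Rightarrow> nat" where
  "doc_count T w = card {i. i < length T \<and> w \<in> T ! i}"

definition emissions :: "nat set list \<Rightarrow> (nat \<times> nat set) set" where
  "emissions T = {(i, {a, b}) | i a b. i < length T \<and> a \<in> T ! i \<and> b \<in> T ! i \<and> a \<noteq> b}"

definition pair_prob :: "nat set list \<Rightarrow> nat \<Rightarrow> real \<Rightarrow> nat set \<Rightarrow> real" where
  "pair_prob T D \<epsilon> e = min 1 (((2 * ln (real D)) / \<epsilon>) * (1 / real (Min (doc_count T ` e))))"

definition emission_pmf :: "nat set list \<Rightarrow> nat \<Rightarrow> real \<Rightarrow> ((nat \<times> nat set) \<Rightarrow> bool) pmf" where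
  "emission_pmf T D \<epsilon> = Pi_pmf (emissions T) False (\<lambda>x. bernoulli_pmf (pair_prob T D \<epsilon> (snd x)))"

definition expected_shuffle_size :: "nat set list \<Rightarrow> nat \<Rightarrow> real \<Rightarrow> real" where
  "expected_shuffle_size T D \<epsilon> =
     measure_pmf.expectation (emission_pmf T D \<epsilon>) (\<lambda>\<omega>. real (card {x \<in> emissions T. \<omega> x}))"

end

theory Submission imports Defs begin
lemma exp_card:
  fixes E :: "'a set" and q :: "'a \<Rightarrow> real"
  assumes fin: "finite E" and q: "\<And>x. x \<in> E \<Longrightarrow> 0 \<le> q x \<and> q x \<le> 1"
  shows "measure_pmf.expectation (Pi_pmf E False (\<lambda>x. bernoulli_pmf (q x)))
           (\<lambda>\<omega>. real (card {x \<in> E. \<omega> x})) = (\<Sum>x\<in>E. q x)"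
proof -
  let ?M = "Pi_pmf E False (\<lambda>x. bernoulli_pmf (q x))"
  have c: "real (card {x \<in> E. \<omega> x}) = (\<Sum>x\<in>E. (if \<omega> x then 1 else 0))" for \<omega> :: "'a \<Rightarrow> bool"
    using fin by (simp add: sum.If_cases Int_def)
  have i: "integrable ?M (\<lambda>\<omega>. if \<omega> x then 1 else 0::real)" for x
    by (rule measure_pmf.integrable_const_bound[where B=1]) auto
  have e: "measure_pmf.expectation ?M (\<lambda>\<omega>. if \<omega> x then 1 else 0::real) = q x" if "x \<in> E" for x
  proof -
    have "measure_pmf.expectation ?M (\<lambda>\<omega>. if \<omega> x then 1 else 0::real)
        = measure_pmf.expectation (map_pmf (\<lambda>f. f x) ?M) (\<lambda>b. if b then 1 else 0::real)"
      by simp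
    also have "\<dots> = q x" using that q[OF that] by (simp add: Pi_pmf_component[OF fin])
    finally show ?thesis .
  qed
  show ?thesis
    unfolding c using i e by (subst Bochner_Integration.integral_sum) auto
qed
lemma double_count:
  fixes T :: "nat set list" and f :: "nat \<Rightarrow> real"
  assumes sub: "\<forall>t \<in> set T. t \<subseteq> {..<D}"
  shows "(\<Sum>i<length T. \<Sum>a\<in>T!i. f a) = (\<Sum>a<D. real (doc_count T a) * f a)"
proof -
  have "(\<Sum>i<length T. \<Sum>a\<in>T!i. f a) = (\<Sum>i<length T. \<Sum>a<D. if a \<in> T!i then f a else 0)"
  proof (rule sum.cong[OF refl])
    fix i assume "i \<in> {..<length T}"
    then have "T!i \<subseteq> {..<D}" using sub by auto
    then show "(\<Sum>a\<in>T!i. f a) = (\<Sum>a<D. if a \<in> T!i then f a else 0)"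
      by (simp add: sum.If_cases Int_absorb1 Int_commute)
  qed
  also have "\<dots> = (\<Sum>a<D. \<Sum>i<length T. if a \<in> T!i then f a else 0)"
    by (rule sum.swap)
  also have "\<dots> = (\<Sum>a<D. real (doc_count T a) * f a)"
  proof (rule sum.cong[OF refl])
    fix a
    have "(\<Sum>i<length T. if a \<in> T!i then f a else 0) = real (card ({..<length T} \<inter> {i. a \<in> T!i})) * f a"
      by (simp add: sum.If_cases)
    also have "{..<length T} \<inter> {i. a \<in> T!i} = {i. i < length T \<and> a \<in> T!i}" by auto
    finally show "(\<Sum>i<length T. if a \<in> T!i then f a else 0) = real (doc_count T a) * f a"
      by (simp add: doc_count_def)
  qed
  finally show ?thesis .
qed

lemma comb_bound:
  fixes T :: "nat set list"
  assumes sub: "\<forall>t \<in> set T. t \<subseteq> {..<D} \<and> card t \<le> L"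
  shows "(\<Sum>x\<in>emissions T. 1 / real (Min (doc_count T ` snd x))) \<le> real L * real D"
proof -
  define n where "n = length T"
  define c where "c = doc_count T"
  define S where "S = (SIGMA i:{..<n}. SIGMA a:T!i. (T!i - {a}))"
  define \<phi> :: "nat \<times> nat \<times> nat \<Rightarrow> nat \<times> nat set" where "\<phi> = (\<lambda>(i,a,b). (i,{a,b}))"
  define g :: "nat \<times> nat \<times> nat \<Rightarrow> real" where "g = (\<lambda>(i,a,b). 1 / real (c a))"
  have finT: "finite (T!i)" if "i < n" for i
    using sub that unfolding n_def by (meson finite_lessThan finite_subset nth_mem)
  have cpos: "c a \<ge> 1" if "i < n" "a \<in> T!i" for i a
  proof -
    have "finite {i. i < length T \<and> a \<in> T ! i}" by simp
    moreover have "i \<in> {i. i < length T \<and> a \<in> T ! i}" using that n_def by auto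
    ultimately have "card {i. i < length T \<and> a \<in> T ! i} \<noteq> 0" by (metis card_0_eq empty_iff)
    then show ?thesis unfolding c_def doc_count_def by linarith
  qed
  have finS: "finite S" unfolding S_def using finT by auto
  have img: "\<phi> ` S = emissions T"
    unfolding S_def \<phi>_def emissions_def n_def by (auto simp: image_iff) blast+
  have g0: "g y \<ge> 0" for y unfolding g_def by (auto split: prod.splits)
  have step: "1 / real (Min (c ` snd x)) \<le> sum g {y \<in> S. \<phi> y = x}" if xE: "x \<in> emissions T" for x
  proof -
    obtain i a b where x: "x = (i,{a,b})" and i: "i < n" and a: "a \<in> T!i" and b: "b \<in> T!i" and ab: "a \<noteq> b"
      using xE unfolding emissions_def n_def by auto
    have sub2: "{(i,a,b),(i,b,a)} \<subseteq> {y \<in> S. \<phi> y = x}"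
      unfolding S_def \<phi>_def x using i a b ab by auto
    have "sum g {(i,a,b),(i,b,a)} \<le> sum g {y \<in> S. \<phi> y = x}"
      by (rule sum_mono2) (use finS sub2 g0 in auto)
    moreover have "sum g {(i,a,b),(i,b,a)} = 1 / real (c a) + 1 / real (c b)"
      using ab unfolding g_def by auto
    moreover have "1 / real (Min (c ` snd x)) \<le> 1 / real (c a) + 1 / real (c b)"
    proof -
      have m: "Min (c ` snd x) = min (c a) (c b)" unfolding x by simp
      have "c a \<ge> 1" "c b \<ge> 1" using cpos i a b by auto
      then show ?thesis unfolding m
        by (cases "c a \<le> c b") (auto simp: min_def)
    qed
    ultimately show ?thesis by linarith
  qed
  have "(\<Sum>x\<in>emissions T. 1 / real (Min (c ` snd x))) \<le> (\<Sum>x\<in>emissions T. sum g {y \<in> S. \<phi> y = x})"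
    by (rule sum_mono) (rule step)
  also have "\<dots> = sum g S"
    using sum.image_gen[OF finS, of g \<phi>] img by simp
  also have "\<dots> = (\<Sum>i<n. \<Sum>a\<in>T!i. \<Sum>b\<in>T!i - {a}. 1 / real (c a))"
    unfolding S_def g_def using finT by (simp add: sum.Sigma[symmetric])
  also have "\<dots> \<le> (\<Sum>i<n. \<Sum>a\<in>T!i. real L * (1 / real (c a)))"
  proof (rule sum_mono, rule sum_mono)
    fix i a assume i: "i \<in> {..<n}" and a: "a \<in> T!i"
    have "card (T!i) \<le> L" using sub i n_def by auto
    then have "real (card (T!i - {a})) \<le> real L" using a finT i
      by (simp add: card_Diff_singleton)
    then show "(\<Sum>b\<in>T!i - {a}. 1 / real (c a)) \<le> real L * (1 / real (c a))"
      by (simp add: divide_right_mono)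
  qed
  also have "\<dots> = (\<Sum>a<D. real (c a) * (real L * (1 / real (c a))))"
    unfolding n_def c_def using sub by (intro double_count) auto
  also have "\<dots> \<le> (\<Sum>a<D. real L)"
    by (rule sum_mono) (auto simp: field_simps)
  also have "\<dots> = real L * real D" by simp
  finally show ?thesis unfolding c_def .
qed

theorem theorem8:
  "\<exists>C::real. \<forall>(T :: nat set list) (D :: nat) (L :: nat) (\<epsilon> :: real).
     D \<ge> 2 \<longrightarrow> 0 < \<epsilon> \<longrightarrow> \<epsilon> \<le> 1 \<longrightarrow>
     (\<forall>t \<in> set T. t \<subseteq> {..<D} \<and> card t \<le> L) \<longrightarrow>
     expected_shuffle_size T D \<epsilon> \<le> C * real D * real L * ln (real D) / \<epsilon>"
proof (intro exI[of _ 2] allI impI)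
  fix T :: "nat set list" and D L :: nat and \<epsilon> :: real
  assume D: "D \<ge> 2" and e0: "0 < \<epsilon>" and e1: "\<epsilon> \<le> 1"
    and sub: "\<forall>t \<in> set T. t \<subseteq> {..<D} \<and> card t \<le> L"
  define K where "K = 2 * ln (real D) / \<epsilon>"
  have K0: "K \<ge> 0" unfolding K_def using D e0 by simp
  have finE: "finite (emissions T)"
  proof -
    have "emissions T \<subseteq> {..<length T} \<times> Pow {..<D}"
    proof
      fix x assume "x \<in> emissions T"
      then obtain i a b where x: "x = (i,{a,b})" and i: "i < length T" and a: "a \<in> T!i" and b: "b \<in> T!i"
        unfolding emissions_def by auto
      have "T!i \<subseteq> {..<D}" using sub nth_mem[OF i] by auto
      then show "x \<in> {..<length T} \<times> Pow {..<D}" using x i a b by auto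
    qed
    then show ?thesis by (rule finite_subset) auto
  qed
  have pp: "0 \<le> pair_prob T D \<epsilon> e \<and> pair_prob T D \<epsilon> e \<le> 1" for e
    using K0 unfolding pair_prob_def K_def[symmetric] by auto
  have "expected_shuffle_size T D \<epsilon> = (\<Sum>x\<in>emissions T. pair_prob T D \<epsilon> (snd x))"
    unfolding expected_shuffle_size_def emission_pmf_def
    by (rule exp_card[OF finE]) (use pp in auto)
  also have "\<dots> \<le> (\<Sum>x\<in>emissions T. K * (1 / real (Min (doc_count T ` snd x))))"
    by (rule sum_mono) (simp add: pair_prob_def K_def[symmetric])
  also have "\<dots> = K * (\<Sum>x\<in>emissions T. 1 / real (Min (doc_count T ` snd x)))"
    by (simp add: sum_distrib_left)
  also have "\<dots> \<le> K * (real L * real D)"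
    by (rule mult_left_mono[OF comb_bound[OF sub] K0])
  also have "\<dots> = 2 * real D * real L * ln (real D) / \<epsilon>"
    unfolding K_def by simp
  finally show "expected_shuffle_size T D \<epsilon> \<le> 2 * real D * real L * ln (real D) / \<epsilon>" .
qed

end
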